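(* Let $n$ be an odd positive integer and $q$ an odd prime power. Then the group $\Gamma L_1(1,q^n)=\Gamma L(1,q^n)\cap SL(n,q)$ does not act transitively on $\mathbb{F}_{q^n}\setminus\{0\}$.
   Context: Regard $\mathbb{F}_{q^n}$ as an $n$-dimensional $\mathbb{F}_q$-vector space, so $GL(n,q)=GL_{\mathbb{F}_q}(\mathbb{F}_{q^n})$. Let $\alpha$ generate $\mathbb{F}_{q^n}^*$, let $\tau(z)=\alpha z$ and $\sigma(z)=z^q$. $\Gamma L(1,q^n)$ is the subgroup of $GL(n,q)$ generated by $\tau$ and $\sigma$ (of order $n(q^n-1)$), and $\Gamma L_1(1,q^n)$ is its intersection with $SL(n,q)$. *)

theory Defs
  imports "HOL-Combinatorics.Permutations" "HOL-Computational_Algebra.Primes"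
begin

definition Fq :: "nat \<Rightarrow> 'a::field set" where
  "Fq q = {x. x ^ q = x}"

definition is_basis :: "'a::field set \<Rightarrow> nat \<Rightarrow> (nat \<Rightarrow> 'a) \<Rightarrow> bool" where
  "is_basis F n b \<longleftrightarrow>
     (\<forall>x. \<exists>!c. (\<forall>i. (i < n \<longrightarrow> c i \<in> F) \<and> (n \<le> i \<longrightarrow> c i = 0))
               \<and> x = (\<Sum>i<n. c i * b i))"

definition coords :: "'a::field set \<Rightarrow> nat \<Rightarrow> (nat \<Rightarrow> 'a) \<Rightarrow> 'a \<Rightarrow> nat \<Rightarrow> 'a" where
  "coords F n b x = (THE c. (\<forall>i. (i < n \<longrightarrow> c i \<in> F) \<and> (n \<le> i \<longrightarrow> c i = 0))
                            \<and> x = (\<Sum>i<n. c i * b i))"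

(* determinant of an F-linear map f of 'a, computed in the basis b
   (matrix entry (j,i) = j-th coordinate of f(b_i)) *)
definition det_wrt :: "'a::field set \<Rightarrow> nat \<Rightarrow> (nat \<Rightarrow> 'a) \<Rightarrow> ('a \<Rightarrow> 'a) \<Rightarrow> 'a" where
  "det_wrt F n b f =
     (\<Sum>p\<in>{p. p permutes {..<n}}. of_int (sign p) * (\<Prod>i<n. coords F n b (f (b i)) (p i)))"

definition lin_det :: "'a::field set \<Rightarrow> nat \<Rightarrow> ('a \<Rightarrow> 'a) \<Rightarrow> 'a" where
  "lin_det F n f = det_wrt F n (SOME b. is_basis F n b) f"

(* Gamma L(1,q^n): the subgroup of GL(n,q) generated by tau(z) = alpha z and
   sigma(z) = z^q.  Since the ambient group GL_{F_q}(F_{q^n}) is finite, the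
   subgroup generated equals the submonoid generated, i.e. the closure of
   {id} under post-composition with tau and sigma. *)
inductive_set GammaL :: "'a::field \<Rightarrow> nat \<Rightarrow> ('a \<Rightarrow> 'a) set"
  for \<alpha> :: "'a" and q :: nat where
  GammaL_id: "id \<in> GammaL \<alpha> q"
| GammaL_tau: "f \<in> GammaL \<alpha> q \<Longrightarrow> (\<lambda>z. \<alpha> * z) \<circ> f \<in> GammaL \<alpha> q"
| GammaL_sigma: "f \<in> GammaL \<alpha> q \<Longrightarrow> (\<lambda>z. z ^ q) \<circ> f \<in> GammaL \<alpha> q"

definition GammaL1 :: "'a::field \<Rightarrow> nat \<Rightarrow> nat \<Rightarrow> ('a \<Rightarrow> 'a) set" where
  "GammaL1 \<alpha> q n = {g \<in> GammaL \<alpha> q. lin_det (Fq q) n g = 1}"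

end

theory Submission imports Defs "Jordan_Normal_Form.Determinant" "HOL-Number_Theory.Residues" begin


definition coeffs :: "'a::field set \<Rightarrow> nat \<Rightarrow> (nat \<Rightarrow> 'a) set" where
  "coeffs F m = {c. \<forall>i. (i < m \<longrightarrow> c i \<in> F) \<and> (m \<le> i \<longrightarrow> c i = 0)}"

definition comb :: "nat \<Rightarrow> (nat \<Rightarrow> 'a::field) \<Rightarrow> (nat \<Rightarrow> 'a) \<Rightarrow> 'a" where
  "comb m c b = (\<Sum>i<m. c i * b i)"

locale subf =
  fixes F :: "'a::{finite,field} set"
  assumes F0: "0 \<in> F" and F1: "1 \<in> F"
    and Fadd: "\<And>x y. x \<in> F \<Longrightarrow> y \<in> F \<Longrightarrow> x + y \<in> F"
    and Fmult: "\<And>x y. x \<in> F \<Longrightarrow> y \<in> F \<Longrightarrow> x * y \<in> F"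
    and Fneg: "\<And>x. x \<in> F \<Longrightarrow> - x \<in> F"
    and Finv: "\<And>x. x \<in> F \<Longrightarrow> inverse x \<in> F"
begin

definition indep :: "nat \<Rightarrow> (nat \<Rightarrow> 'a) \<Rightarrow> bool" where
  "indep m b \<longleftrightarrow> inj_on (\<lambda>c. comb m c b) (coeffs F m)"

definition span :: "nat \<Rightarrow> (nat \<Rightarrow> 'a) \<Rightarrow> 'a set" where
  "span m b = (\<lambda>c. comb m c b) ` coeffs F m"

lemma Fdiff: "x \<in> F \<Longrightarrow> y \<in> F \<Longrightarrow> x - y \<in> F"
  using Fadd Fneg by (metis diff_conv_add_uminus)

lemma Fsum: "(\<And>i. i \<in> A \<Longrightarrow> f i \<in> F) \<Longrightarrow> sum f A \<in> F"
  by (induction A rule: infinite_finite_induct) (auto intro: Fadd F0)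

lemma card_coeffs: "card (coeffs F m) = card F ^ m"
proof -
  have "bij_betw (\<lambda>c. restrict c {..<m}) (coeffs F m) (PiE {..<m} (\<lambda>_. F))"
  proof (rule bij_betw_imageI)
    show "inj_on (\<lambda>c. restrict c {..<m}) (coeffs F m)"
    proof (rule inj_onI)
      fix c d assume c: "c \<in> coeffs F m" and d: "d \<in> coeffs F m"
        and e: "restrict c {..<m} = restrict d {..<m}"
      show "c = d"
      proof
        fix i show "c i = d i"
        proof (cases "i < m")
          case True thus ?thesis using fun_cong[OF e, of i] by simp
        next
          case False thus ?thesis using c d by (simp add: coeffs_def)
        qed
      qed
    qed
  next
    show "(\<lambda>c. restrict c {..<m}) ` coeffs F m = PiE {..<m} (\<lambda>_. F)"
    proof
      show "(\<lambda>c. restrict c {..<m}) ` coeffs F m \<subseteq> PiE {..<m} (\<lambda>_. F)"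
        by (rule image_subsetI) (simp add: coeffs_def restrict_PiE_iff)
    next
      show "PiE {..<m} (\<lambda>_. F) \<subseteq> (\<lambda>c. restrict c {..<m}) ` coeffs F m"
      proof
        fix d assume d: "d \<in> PiE {..<m} (\<lambda>_. F)"
        let ?c = "\<lambda>i. if i < m then d i else 0"
        have "?c \<in> coeffs F m" using d by (auto simp: coeffs_def)
        moreover have "restrict ?c {..<m} = d"
          using d by (auto simp: PiE_def extensional_def restrict_def)
        ultimately show "d \<in> (\<lambda>c. restrict c {..<m}) ` coeffs F m" by (metis (no_types, lifting) image_eqI)
      qed
    qed
  qed
  hence "card (coeffs F m) = card (PiE {..<m} (\<lambda>_. F :: 'a set))" by (rule bij_betw_same_card)
  also have "... = card F ^ m" by (simp add: card_PiE)
  finally show ?thesis .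
qed

lemma indep_card: "indep m b \<Longrightarrow> card (span m b) = card F ^ m"
  unfolding indep_def span_def using card_image card_coeffs by metis

lemma comb_cong: "(\<And>i. i < m \<Longrightarrow> c i = d i) \<Longrightarrow> (\<And>i. i < m \<Longrightarrow> b i = b' i) \<Longrightarrow> comb m c b = comb m d b'"
  unfolding comb_def by (rule sum.cong) auto

lemma comb_Suc: "comb (Suc m) c b = comb m c b + c m * b m"
  unfolding comb_def by simp

lemma ext_indep:
  assumes ind: "indep m b" and v: "v \<notin> span m b"
  shows "indep (Suc m) (b(m := v))"
  unfolding indep_def
proof (rule inj_onI)
  fix c d assume c: "c \<in> coeffs F (Suc m)" and d: "d \<in> coeffs F (Suc m)"
    and e: "comb (Suc m) c (b(m := v)) = comb (Suc m) d (b(m := v))"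
  define c0 where "c0 = c(m := 0)"
  define d0 where "d0 = d(m := 0)"
  have c0: "c0 \<in> coeffs F m" using c by (auto simp: coeffs_def c0_def)
  have d0: "d0 \<in> coeffs F m" using d by (auto simp: coeffs_def d0_def)
  have ec: "comb (Suc m) c (b(m := v)) = comb m c0 b + c m * v"
    unfolding comb_Suc by (simp add: c0_def, rule comb_cong, auto)
  have ed: "comb (Suc m) d (b(m := v)) = comb m d0 b + d m * v"
    unfolding comb_Suc by (simp add: d0_def, rule comb_cong, auto)
  have cm: "c m \<in> F" and dm: "d m \<in> F" using c d by (auto simp: coeffs_def)
  show "c = d"
  proof (cases "c m = d m")
    case True
    hence "comb m c0 b = comb m d0 b" using e ec ed by simp
    hence "c0 = d0" using ind c0 d0 unfolding indep_def by (auto dest: inj_onD)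
    hence "c0(m := c m) = d0(m := d m)" using True by simp
    thus ?thesis by (simp add: c0_def d0_def)
  next
    case False
    define e where "e = inverse (c m - d m)"
    have eF: "e \<in> F" unfolding e_def using cm dm by (intro Finv Fdiff)
    define w where "w = (\<lambda>i. e * (d0 i - c0 i))"
    have wF: "w \<in> coeffs F m" using c0 d0 eF by (auto simp: coeffs_def w_def intro!: Fmult Fdiff)
    have "(c m - d m) * v = comb m d0 b - comb m c0 b" using e ec ed by (simp add: algebra_simps)
    also have "... = comb m (\<lambda>i. d0 i - c0 i) b" by (simp add: comb_def algebra_simps sum_subtractf)
    finally have "v = e * comb m (\<lambda>i. d0 i - c0 i) b" using False unfolding e_def
      by (metis divide_inverse_commute eq_iff_diff_eq_0 nonzero_mult_div_cancel_left)
    also have "... = comb m w b" by (simp add: comb_def w_def sum_distrib_left mult.assoc)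
    finally have "v \<in> span m b" using wF unfolding span_def by blast
    thus ?thesis using v by blast
  qed
qed

lemma card_F_ge2: "card F \<ge> 2"
proof -
  have "{0, 1} \<subseteq> F" using F0 F1 by auto
  hence "card {0, 1::'a} \<le> card F" by (intro card_mono) auto
  thus ?thesis by simp
qed

lemma exists_basis: "\<exists>d b. indep d b \<and> span d b = UNIV"
proof -
  define S where "S = {m. \<exists>b. indep m b}"
  have bnd: "m \<le> card (UNIV :: 'a set)" if mS: "m \<in> S" for m
  proof -
    obtain b where "indep m b" using mS S_def by blast
    hence "card F ^ m \<le> card (UNIV :: 'a set)" using indep_card[of m b] card_mono[of UNIV "span m b"] by auto
    moreover have "m < 2 ^ m" by simp
    moreover have "2 ^ m \<le> card F ^ m" using card_F_ge2 by (simp add: power_mono)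
    ultimately show ?thesis by linarith
  qed
  have finS: "finite S" by (rule finite_subset[of _ "{..card (UNIV :: 'a set)}"]) (use bnd in auto)
  have "0 \<in> S"
  proof -
    have "coeffs F 0 = {\<lambda>_. 0}" by (auto simp: coeffs_def)
    thus ?thesis unfolding S_def indep_def by auto
  qed
  define d where "d = Max S"
  have "d \<in> S" unfolding d_def using finS \<open>0 \<in> S\<close> by (intro Max_in) auto
  then obtain b where b: "indep d b" unfolding S_def by blast
  have "span d b = UNIV"
  proof (rule ccontr)
    assume "span d b \<noteq> UNIV"
    then obtain v where "v \<notin> span d b" by blast
    hence "Suc d \<in> S" using ext_indep[OF b] unfolding S_def by blast
    hence "Suc d \<le> d" unfolding d_def using finS by (simp add: Max_ge)
    thus False by simp
  qed
  thus ?thesis using b by blast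
qed

lemma basis_card: "\<exists>d b. is_basis F d b \<and> card (UNIV :: 'a set) = card F ^ d"
proof -
  obtain d b where b: "indep d b" "span d b = UNIV" using exists_basis by blast
  have "is_basis F d b"
    unfolding is_basis_def
  proof
    fix x
    obtain c where c: "c \<in> coeffs F d" "x = comb d c b" using b(2) unfolding span_def by blast
    show "\<exists>!c. (\<forall>i. (i < d \<longrightarrow> c i \<in> F) \<and> (d \<le> i \<longrightarrow> c i = 0)) \<and> x = (\<Sum>i<d. c i * b i)"
    proof (rule ex1I[of _ c])
      show "(\<forall>i. (i < d \<longrightarrow> c i \<in> F) \<and> (d \<le> i \<longrightarrow> c i = 0)) \<and> x = (\<Sum>i<d. c i * b i)"
        using c by (simp add: coeffs_def comb_def)
    next
      fix c' assume "(\<forall>i. (i < d \<longrightarrow> c' i \<in> F) \<and> (d \<le> i \<longrightarrow> c' i = 0)) \<and> x = (\<Sum>i<d. c' i * b i)"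
      hence "c' \<in> coeffs F d" "x = comb d c' b" by (simp_all add: coeffs_def comb_def)
      thus "c' = c" using c b(1) unfolding indep_def by (auto dest: inj_onD)
    qed
  qed
  moreover have "card (UNIV :: 'a set) = card F ^ d" using indep_card[OF b(1)] b(2) by simp
  ultimately show ?thesis by blast
qed

end


lemma ff_pow_card:
  fixes x :: "'a::{finite,field}"
  shows "x ^ card (UNIV :: 'a set) = x"
proof (cases "x = 0")
  case False
  have "x * (\<Prod>y\<in>UNIV-{0}. x * y) = x * x ^ (card (UNIV :: 'a set) - 1) * \<Prod>(UNIV-{0})"
    by (simp add: prod.distrib mult_ac)
  also have "x * x ^ (card (UNIV :: 'a set) - 1) = x ^ Suc (card (UNIV :: 'a set) - 1)"
    by (subst power_Suc) auto
  also have "Suc (card (UNIV :: 'a set) - 1) = card (UNIV :: 'a set)"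
    using finite_UNIV_card_ge_0[where ?'a = 'a] by simp
  also have "(\<Prod>y\<in>UNIV-{0}. x * y) = (\<Prod>y\<in>UNIV-{0}. y)"
    by (rule prod.reindex_bij_witness[of _ "\<lambda>y. y / x" "\<lambda>y. x * y"]) (use False in auto)
  finally show ?thesis
    by simp
qed (use finite_UNIV_card_ge_0[where ?'a = 'a] in auto)

locale LL =
  fixes \<alpha> :: "'a::{finite, field}" and q n :: nat
  assumes odd_n: "odd n" and npos: "n > 0"
    and qpp: "\<exists>p k. prime p \<and> k > 0 \<and> q = p ^ k" and oddq: "odd q"
    and cardA: "card (UNIV :: 'a set) = q ^ n"
    and gen: "\<forall>x::'a. x \<noteq> 0 \<longrightarrow> (\<exists>k::nat. x = \<alpha> ^ k)"
begin

lemma pow_qn: "(x::'a) ^ (q ^ n) = x"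
  using ff_pow_card[of x] cardA by simp

lemma q_ge3: "q \<ge> 3"
proof -
  obtain p k where pk: "prime p" "k > 0" "q = p ^ k" using qpp by blast
  have "p \<ge> 2" using pk(1) prime_ge_2_nat by blast
  moreover have "p \<le> p ^ k" using pk \<open>p \<ge> 2\<close> by (intro self_le_power) auto
  ultimately have "q \<ge> 2" using pk by simp
  with oddq show ?thesis by presburger
qed

lemma char_p: "\<exists>p k. prime p \<and> q = p ^ k \<and> CHAR('a) = p \<and> k > 0"
proof -
  obtain p k where pk: "prime p" "k > 0" "q = p ^ k" using qpp by blast
  have cp: "prime CHAR('a)"
    by (rule prime_CHAR_semidom) (rule finite_imp_CHAR_pos, simp)
  have "CHAR('a) dvd p ^ (k * n)"
    using CHAR_dvd_CARD[where ?'a='a] cardA pk by (simp add: power_mult)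
  hence "CHAR('a) dvd p" using cp prime_dvd_power by blast
  hence "CHAR('a) = p" using cp pk(1) by (simp add: primes_dvd_imp_eq)
  thus ?thesis using pk by blast
qed

lemma frob: "((x::'a) + y) ^ q = x ^ q + y ^ q"
proof -
  obtain p k where pk: "prime p" "q = p ^ k" "CHAR('a) = p" using char_p by blast
  show ?thesis by (rule freshmans_dream') (use pk in auto)
qed

lemma minus_one_ne_one: "(-1::'a) \<noteq> 1"
proof
  assume h: "(-1::'a) = 1"
  obtain p k where pk: "prime p" "q = p ^ k" "CHAR('a) = p" "k > 0" using char_p by blast
  have "of_nat 2 = (0::'a)" using h by (simp add: eq_neg_iff_add_eq_0)
  hence "p dvd 2" using pk of_nat_eq_0_iff_char_dvd by metis
  hence "p \<le> 2" by (simp add: dvd_imp_le)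
  moreover have "p \<ge> 2" using pk(1) prime_ge_2_nat by blast
  ultimately have "p = 2" by simp
  hence "even q" using pk by simp
  thus False using oddq by simp
qed

definition F :: "'a set" where "F = Fq q"

lemma F_iff: "x \<in> F \<longleftrightarrow> x ^ q = x" unfolding F_def Fq_def by simp

lemma F_0: "0 \<in> F" using q_ge3 by (simp add: F_iff)
lemma F_1: "1 \<in> F" by (simp add: F_iff)
lemma F_add: "x \<in> F \<Longrightarrow> y \<in> F \<Longrightarrow> x + y \<in> F" by (simp add: F_iff frob)
lemma F_mult: "x \<in> F \<Longrightarrow> y \<in> F \<Longrightarrow> x * y \<in> F" by (simp add: F_iff power_mult_distrib)
lemma F_neg: "x \<in> F \<Longrightarrow> - x \<in> F"
proof -
  assume "x \<in> F"
  have "(- x) ^ q = (-1) ^ q * x ^ q" by (metis mult_minus1 power_mult_distrib)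
  also have "... = - (x ^ q)" using oddq by simp
  finally show ?thesis using \<open>x \<in> F\<close> by (simp add: F_iff)
qed
lemma F_inv: "x \<in> F \<Longrightarrow> inverse x \<in> F" by (simp add: F_iff power_inverse)
lemma F_m1: "-1 \<in> F" using F_neg F_1 by blast

lemma alpha_nz: "\<alpha> \<noteq> 0"
proof
  assume "\<alpha> = 0"
  obtain k where "(-1::'a) = \<alpha> ^ k" using gen by force
  thus False using \<open>\<alpha> = 0\<close> minus_one_ne_one by (cases k) auto
qed

end
context LL begin

lemma subf_F: "subf F"
  by unfold_locales (auto intro: F_0 F_1 F_add F_mult F_neg F_inv)

lemma card_F_le: "card F \<le> q"
proof -
  define P :: "'a poly" where "P = Polynomial.monom 1 q + [:0, -1:]"
  have dP: "degree P = q"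
    unfolding P_def using q_ge3 by (subst degree_add_eq_left) (auto simp: degree_monom_eq)
  hence "P \<noteq> 0" using q_ge3 by auto
  have "F = {x. poly P x = 0}" by (auto simp: F_iff P_def poly_monom)
  thus ?thesis using card_poly_roots_bound[OF \<open>P \<noteq> 0\<close>] dP by simp
qed

definition NN where "NN = q ^ n - 1"

lemma qn_ge: "q ^ n \<ge> 3"
proof -
  have "q \<le> q ^ n" using q_ge3 npos by (intro self_le_power) auto
  thus ?thesis using q_ge3 by simp
qed

lemma alpha_NN: "\<alpha> ^ NN = 1"
proof -
  have "\<alpha> * \<alpha> ^ NN = \<alpha> ^ Suc NN" by simp
  also have "Suc NN = q ^ n" unfolding NN_def using qn_ge by simp
  also have "\<alpha> ^ (q ^ n) = \<alpha> * 1" using pow_qn by simp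
  finally show ?thesis using alpha_nz by simp
qed

lemma inj_alpha: "inj_on (\<lambda>j. \<alpha> ^ j) {..<NN}"
proof -
  have NNpos: "NN > 0" unfolding NN_def using qn_ge by simp
  have "UNIV - {0} \<subseteq> (\<lambda>j. \<alpha> ^ j) ` {..<NN}"
  proof
    fix x :: 'a assume "x \<in> UNIV - {0}"
    then obtain k where k: "x = \<alpha> ^ k" using gen by blast
    have "(\<alpha> ^ NN) ^ (k div NN) * \<alpha> ^ (k mod NN) = \<alpha> ^ k"
      by (simp add: power_mult[symmetric] power_add[symmetric])
    hence "\<alpha> ^ k = (\<alpha> ^ NN) ^ (k div NN) * \<alpha> ^ (k mod NN)" by simp
    also have "... = \<alpha> ^ (k mod NN)" by (simp add: alpha_NN)
    finally show "x \<in> (\<lambda>j. \<alpha> ^ j) ` {..<NN}" using k NNpos by auto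
  qed
  hence "card (UNIV - {0::'a}) \<le> card ((\<lambda>j. \<alpha> ^ j) ` {..<NN})" by (intro card_mono) auto
  moreover have "card (UNIV - {0::'a}) = NN" unfolding NN_def using cardA by (simp add: card_Diff_singleton)
  moreover have "card ((\<lambda>j. \<alpha> ^ j) ` {..<NN}) \<le> NN" using card_image_le[of "{..<NN}" "\<lambda>j. \<alpha> ^ j"] by simp
  ultimately show ?thesis by (intro eq_card_imp_inj_on) auto
qed

lemma card_F_ge: "card F \<ge> q"
proof -
  have dv: "(q - 1) dvd NN"
  proof -
    have "[(q - 1) + 1 = 0 + 1] (mod (q - 1))" by (intro cong_add) (auto simp: cong_def)
    hence "[q = 1] (mod (q - 1))" using q_ge3 by simp
    hence "[q ^ n = 1 ^ n] (mod (q - 1))" by (rule cong_pow)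
    hence "[q ^ n = 1] (mod (q - 1))" by simp
    thus ?thesis unfolding NN_def using qn_ge by (subst (asm) cong_altdef_nat) auto
  qed
  define M where "M = NN div (q - 1)"
  have NM: "NN = M * (q - 1)" unfolding M_def using dv by simp
  have Mpos: "M > 0" using NM qn_ge unfolding NN_def by (cases M) auto
  define G where "G = (\<lambda>j. \<alpha> ^ (j * M)) ` {..<q - 1}"
  have GF: "G \<subseteq> F"
  proof
    fix x assume "x \<in> G"
    then obtain j where x: "x = \<alpha> ^ (j * M)" by (auto simp: G_def)
    have "x ^ q = \<alpha> ^ (j * M * (1 + (q - 1)))" using q_ge3 by (simp add: x power_mult)
    also have "j * M * (1 + (q - 1)) = j * M + NN * j"
    proof -
      have "\<And>a. j * M * (1 + a) = j * M + M * a * j" by (simp add: algebra_simps)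
      thus ?thesis unfolding NM by blast
    qed
    also have "\<alpha> ^ (j * M + NN * j) = \<alpha> ^ (j * M) * (\<alpha> ^ NN) ^ j" by (simp add: power_add power_mult)
    finally show "x \<in> F" by (simp add: F_iff alpha_NN x)
  qed
  have injG: "inj_on (\<lambda>j. \<alpha> ^ (j * M)) {..<q - 1}"
  proof (rule inj_onI)
    fix i j assume i: "i \<in> {..<q - 1}" and j: "j \<in> {..<q - 1}" and e: "\<alpha> ^ (i * M) = \<alpha> ^ (j * M)"
    have "i * M < NN" using i Mpos NM by simp
    moreover have "j * M < NN" using j Mpos NM by simp
    ultimately have "i * M = j * M" using inj_alpha e by (auto dest: inj_onD)
    thus "i = j" using Mpos by simp
  qed
  have "0 \<notin> G" using alpha_nz by (auto simp: G_def)
  have "card (insert 0 G) = q"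
    using \<open>0 \<notin> G\<close> card_image[OF injG] q_ge3 by (simp add: G_def)
  moreover have "insert 0 G \<subseteq> F" using GF F_0 by auto
  ultimately show ?thesis by (metis card_mono finite)
qed

lemma card_F: "card F = q" using card_F_le card_F_ge by simp

lemma basis_ex: "\<exists>b. is_basis F n b"
proof -
  obtain d b where b: "is_basis F d b" "card (UNIV :: 'a set) = card F ^ d"
    using subf.basis_card[OF subf_F] by blast
  have "q ^ d = q ^ n" using b(2) cardA card_F by simp
  hence "d = n" using q_ge3 by (simp add: power_inject_exp)
  thus ?thesis using b by blast
qed

end
context LL begin

lemmas comb_Suc = subf.comb_Suc[OF subf_F]

definition bb where "bb = (SOME b. is_basis F n b)"

lemma bb_basis: "is_basis F n bb"
  unfolding bb_def using basis_ex by (rule someI_ex)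

abbreviation co where "co x \<equiv> coords F n bb x"

lemma basis_P: "\<exists>!c. c \<in> coeffs F n \<and> x = comb n c bb"
  using bb_basis unfolding is_basis_def coeffs_def comb_def by simp

lemma co_def': "co x = (THE c. c \<in> coeffs F n \<and> x = comb n c bb)"
  unfolding coords_def coeffs_def comb_def by simp

lemma co_in: "co x \<in> coeffs F n" and co_eq: "x = comb n (co x) bb"
  using theI'[OF basis_P[of x]] unfolding co_def'[symmetric] by auto

lemma co_uniq: "c \<in> coeffs F n \<Longrightarrow> co (comb n c bb) = c"
  unfolding co_def' by (rule the1_equality[OF basis_P]) auto

lemma co_F: "co x i \<in> F"
  using co_in[of x] F_0 by (cases "i < n") (auto simp: coeffs_def)

definition lin :: "('a \<Rightarrow> 'a) \<Rightarrow> bool" where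
  "lin f \<longleftrightarrow> (\<forall>x y. f (x + y) = f x + f y) \<and> (\<forall>c\<in>F. \<forall>x. f (c * x) = c * f x)"

lemma lin_comb: "lin f \<Longrightarrow> f (comb m c b) = comb m c (\<lambda>i. f (b i))" if "\<forall>i. c i \<in> F"
proof (induction m)
  case 0
  have "f 0 = f (0 + 0)" by simp
  also have "... = f 0 + f 0" using 0 unfolding lin_def by blast
  finally have "f 0 = 0" by (metis add_cancel_right_right)
  thus ?case by (simp add: comb_def)
next
  case (Suc m)
  have "f (comb (Suc m) c b) = f (comb m c b) + f (c m * b m)"
    using Suc.prems unfolding lin_def comb_Suc by blast
  also have "f (c m * b m) = c m * f (b m)" using Suc.prems that unfolding lin_def by blast
  finally show ?case using Suc by (simp add: comb_Suc)
qed

definition Mat :: "('a \<Rightarrow> 'a) \<Rightarrow> 'a mat" where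
  "Mat f = mat n n (\<lambda>(i, j). co (f (bb i)) j)"

lemma Mat_carrier: "Mat f \<in> carrier_mat n n" unfolding Mat_def by simp

lemma det_Mat: "det_wrt F n bb f = det (Mat f)"
proof -
  have "det (Mat f) = (\<Sum>p\<in>{p. p permutes {0..<n}}. signof p * (\<Prod>i = 0..<n. Mat f $$ (i, p i)))"
    by (rule det_def'[OF Mat_carrier])
  also have "... = (\<Sum>p\<in>{p. p permutes {..<n}}. of_int (sign p) * (\<Prod>i<n. co (f (bb i)) (p i)))"
  proof (rule sum.cong)
    show "{p. p permutes {0..<n}} = {p. p permutes {..<n}}" by (simp add: atLeast0LessThan)
  next
    fix p assume "p \<in> {p. p permutes {..<n}}"
    hence p: "p permutes {..<n}" by simp
    have "(\<Prod>i = 0..<n. Mat f $$ (i, p i)) = (\<Prod>i<n. co (f (bb i)) (p i))"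
    proof (rule prod.cong)
      fix i assume "i \<in> {..<n}"
      moreover have "p i \<in> {..<n}" using permutes_in_image[OF p] \<open>i \<in> {..<n}\<close> by simp
      ultimately show "Mat f $$ (i, p i) = co (f (bb i)) (p i)" by (simp add: Mat_def)
    qed (simp add: atLeast0LessThan)
    thus "signof p * (\<Prod>i = 0..<n. Mat f $$ (i, p i)) = of_int (sign p) * (\<Prod>i<n. co (f (bb i)) (p i))" by simp
  qed
  finally show ?thesis unfolding det_wrt_def by simp
qed

definition D :: "('a \<Rightarrow> 'a) \<Rightarrow> 'a" where "D f = lin_det (Fq q) n f"

lemma D_Mat: "D f = det (Mat f)"
  unfolding D_def lin_det_def using det_Mat unfolding bb_def F_def by simp

lemma Mat_comp:
  assumes lf: "lin f" and lg: "lin g"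
  shows "Mat (f \<circ> g) = Mat g * Mat f"
proof (rule eq_matI)
  fix i k assume i: "i < dim_row (Mat g * Mat f)" and k: "k < dim_col (Mat g * Mat f)"
  hence i: "i < n" and k: "k < n" by (auto simp: Mat_def)
  define cg where "cg = co (g (bb i))"
  define h where "h = (\<lambda>k. if k < n then (\<Sum>j<n. cg j * co (f (bb j)) k) else 0)"
  have hin: "h \<in> coeffs F n"
    unfolding coeffs_def h_def cg_def by (auto intro!: subf.Fsum[OF subf_F] F_mult co_F)
  have "f (g (bb i)) = f (comb n cg bb)" using co_eq unfolding cg_def by metis
  also have "... = comb n cg (\<lambda>j. f (bb j))" using lf co_F unfolding cg_def by (intro lin_comb) auto
  also have "... = (\<Sum>j<n. cg j * (\<Sum>k<n. co (f (bb j)) k * bb k))"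
    unfolding comb_def by (rule sum.cong) (auto simp: co_eq[symmetric, unfolded comb_def])
  also have "... = (\<Sum>k<n. (\<Sum>j<n. cg j * co (f (bb j)) k) * bb k)"
    by (simp add: sum_distrib_left sum_distrib_right mult.assoc) (rule sum.swap)
  also have "... = comb n h bb" unfolding comb_def h_def by (rule sum.cong) auto
  finally have "co ((f \<circ> g) (bb i)) = h" using co_uniq[OF hin] by simp
  hence "co ((f \<circ> g) (bb i)) k = (\<Sum>j<n. cg j * co (f (bb j)) k)" using k by (simp add: h_def)
  moreover have "(Mat g * Mat f) $$ (i, k) = (\<Sum>j<n. cg j * co (f (bb j)) k)"
    using i k by (simp add: Mat_def scalar_prod_def cg_def atLeast0LessThan)
  ultimately show "Mat (f \<circ> g) $$ (i, k) = (Mat g * Mat f) $$ (i, k)" using i k by (simp add: Mat_def)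
qed (auto simp: Mat_def)

lemma D_comp: "lin f \<Longrightarrow> lin g \<Longrightarrow> D (f \<circ> g) = D f * D g"
  unfolding D_Mat by (simp add: Mat_comp det_mult[OF Mat_carrier Mat_carrier] mult.commute)

lemma D_scal: assumes c: "c \<in> F" shows "D (\<lambda>z. c * z) = c ^ n"
proof -
  have "Mat (\<lambda>z. c * z) = c \<cdot>\<^sub>m 1\<^sub>m n"
  proof (rule eq_matI)
    fix i j assume i: "i < dim_row (c \<cdot>\<^sub>m 1\<^sub>m n)" and j: "j < dim_col (c \<cdot>\<^sub>m 1\<^sub>m n)"
    hence i: "i < n" and j: "j < n" by auto
    define e where "e = (\<lambda>j. if j = i then c else 0)"
    have ein: "e \<in> coeffs F n" using i c F_0 by (auto simp: coeffs_def e_def)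
    have "comb n e bb = (\<Sum>j<n. if j = i then c * bb j else 0)" unfolding comb_def e_def
      by (rule sum.cong) auto
    also have "... = c * bb i" using i by (simp add: sum.delta)
    finally have "comb n e bb = c * bb i" .
    hence "co (c * bb i) = e" using co_uniq[OF ein] by simp
    thus "Mat (\<lambda>z. c * z) $$ (i, j) = (c \<cdot>\<^sub>m 1\<^sub>m n) $$ (i, j)" using i j by (auto simp: Mat_def e_def)
  qed (auto simp: Mat_def)
  thus ?thesis unfolding D_Mat by simp
qed

lemma lin_comp: "lin f \<Longrightarrow> lin g \<Longrightarrow> lin (f \<circ> g)" unfolding lin_def by simp

lemma lin_tau: "lin (\<lambda>z. \<alpha> * z)" unfolding lin_def by (simp add: algebra_simps)

lemma lin_sigma: "lin (\<lambda>z. z ^ q)" unfolding lin_def by (simp add: frob power_mult_distrib F_iff)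

end
context LL begin

abbreviation "Dt \<equiv> D (\<lambda>z. \<alpha> * z)"
abbreviation "Ds \<equiv> D (\<lambda>z. z ^ q)"

lemma lin_id: "lin id" unfolding lin_def by simp

lemma GammaL_lin: "g \<in> GammaL \<alpha> q \<Longrightarrow> lin g"
proof (induction rule: GammaL.induct)
  case GammaL_id show ?case by (rule lin_id)
next
  case (GammaL_tau f) show ?case by (rule lin_comp[OF lin_tau GammaL_tau.IH])
next
  case (GammaL_sigma f) show ?case by (rule lin_comp[OF lin_sigma GammaL_sigma.IH])
qed

lemma D_id: "D id = 1"
proof -
  have "id = (\<lambda>z::'a. 1 * z)" by auto
  thus ?thesis using D_scal[OF F_1] by simp
qed

lemma t_mem: "(\<lambda>z. \<alpha> ^ j * z) \<in> GammaL \<alpha> q \<and> D (\<lambda>z. \<alpha> ^ j * z) = Dt ^ j"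
proof (induction j)
  case 0
  have "(\<lambda>z::'a. \<alpha> ^ 0 * z) = id" by auto
  thus ?case using D_id GammaL.GammaL_id by simp
next
  case (Suc j)
  have e: "(\<lambda>z. \<alpha> ^ Suc j * z) = (\<lambda>z. \<alpha> * z) \<circ> (\<lambda>z. \<alpha> ^ j * z)"
    by (rule ext) (simp add: comp_def mult.assoc)
  have m: "(\<lambda>z. \<alpha> ^ j * z) \<in> GammaL \<alpha> q" and dj: "D (\<lambda>z. \<alpha> ^ j * z) = Dt ^ j" using Suc by auto
  have "(\<lambda>z. \<alpha> ^ Suc j * z) \<in> GammaL \<alpha> q" unfolding e by (rule GammaL.GammaL_tau[OF m])
  moreover have "D (\<lambda>z. \<alpha> ^ Suc j * z) = Dt * Dt ^ j"
    unfolding e by (subst D_comp[OF lin_tau GammaL_lin[OF m]]) (simp only: dj)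
  ultimately show ?case by simp
qed

lemma s_mem: "(\<lambda>z. z ^ (q ^ j)) \<in> GammaL \<alpha> q \<and> D (\<lambda>z. z ^ (q ^ j)) = Ds ^ j"
proof (induction j)
  case 0
  have "(\<lambda>z::'a. z ^ (q ^ 0)) = id" by auto
  thus ?case using D_id GammaL.GammaL_id by simp
next
  case (Suc j)
  have h: "\<And>z::'a. z ^ (q ^ Suc j) = (z ^ (q ^ j)) ^ q"
  proof -
    fix z :: 'a
    have "z ^ (q ^ Suc j) = z ^ (q ^ j * q)" by (simp add: mult.commute)
    thus "z ^ (q ^ Suc j) = (z ^ (q ^ j)) ^ q" by (simp only: power_mult)
  qed
  have e: "(\<lambda>z::'a. z ^ (q ^ Suc j)) = (\<lambda>z. z ^ q) \<circ> (\<lambda>z. z ^ (q ^ j))"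
  proof (rule ext)
    fix z :: 'a
    show "z ^ (q ^ Suc j) = ((\<lambda>z. z ^ q) \<circ> (\<lambda>z. z ^ (q ^ j))) z"
      using h[of z] by (simp only: comp_apply)
  qed
  have m: "(\<lambda>z. z ^ (q ^ j)) \<in> GammaL \<alpha> q" and dj: "D (\<lambda>z. z ^ (q ^ j)) = Ds ^ j" using Suc by auto
  have "(\<lambda>z. z ^ (q ^ Suc j)) \<in> GammaL \<alpha> q" unfolding e by (rule GammaL.GammaL_sigma[OF m])
  moreover have "D (\<lambda>z. z ^ (q ^ Suc j)) = Ds * Ds ^ j"
    unfolding e by (subst D_comp[OF lin_sigma GammaL_lin[OF m]]) (simp only: dj)
  ultimately show ?case by simp
qed

lemma Ds_n: "Ds ^ n = 1"
proof -
  have "(\<lambda>z::'a. z ^ (q ^ n)) = id" using pow_qn by auto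
  thus ?thesis using s_mem[of n] D_id by simp
qed

lemma Dt_q: "Dt ^ q = Dt"
proof -
  have e: "(\<lambda>z. z ^ q) \<circ> (\<lambda>z. \<alpha> * z) = (\<lambda>z. \<alpha> ^ q * z) \<circ> (\<lambda>z. z ^ q)"
    by (rule ext) (simp add: comp_def power_mult_distrib)
  have tq: "(\<lambda>z. \<alpha> ^ q * z) \<in> GammaL \<alpha> q" "D (\<lambda>z. \<alpha> ^ q * z) = Dt ^ q" using t_mem[of q] by auto
  have "Ds * Dt = D ((\<lambda>z. z ^ q) \<circ> (\<lambda>z. \<alpha> * z))" by (rule D_comp[OF lin_sigma lin_tau, symmetric])
  also have "... = D ((\<lambda>z. \<alpha> ^ q * z) \<circ> (\<lambda>z. z ^ q))" by (simp only: e)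
  also have "... = Dt ^ q * Ds" by (subst D_comp[OF GammaL_lin[OF tq(1)] lin_sigma]) (simp only: tq(2))
  finally have "Ds * Dt = Dt ^ q * Ds" .
  moreover have "Ds \<noteq> 0" using Ds_n npos by (metis power_0_left zero_neq_one less_not_refl2)
  ultimately show ?thesis by (simp add: mult.commute)
qed

lemma GammaL_form: "g \<in> GammaL \<alpha> q \<Longrightarrow> \<exists>K I. g = (\<lambda>z. \<alpha> ^ K * z ^ (q ^ I)) \<and> D g = Dt ^ K * Ds ^ I"
proof (induction rule: GammaL.induct)
  case GammaL_id
  have "id = (\<lambda>z::'a. \<alpha> ^ 0 * z ^ (q ^ 0))" by auto
  thus ?case using D_id by (intro exI[of _ 0]) simp
next
  case (GammaL_tau f)
  then obtain K I where KI: "f = (\<lambda>z. \<alpha> ^ K * z ^ (q ^ I))" "D f = Dt ^ K * Ds ^ I" by blast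
  have "(\<lambda>z. \<alpha> * z) \<circ> f = (\<lambda>z. \<alpha> ^ Suc K * z ^ (q ^ I))"
    unfolding KI(1) by (rule ext) (simp add: comp_def mult.assoc)
  moreover have "D ((\<lambda>z. \<alpha> * z) \<circ> f) = Dt ^ Suc K * Ds ^ I"
    by (subst D_comp[OF lin_tau GammaL_lin[OF GammaL_tau.hyps]]) (simp only: KI(2) power_Suc mult.assoc)
  ultimately show ?case by blast
next
  case (GammaL_sigma f)
  then obtain K I where KI: "f = (\<lambda>z. \<alpha> ^ K * z ^ (q ^ I))" "D f = Dt ^ K * Ds ^ I" by blast
  have h: "\<And>z::'a. (\<alpha> ^ K * z ^ (q ^ I)) ^ q = \<alpha> ^ (K * q) * z ^ (q ^ Suc I)"
  proof -
    fix z :: 'a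
    have "z ^ (q ^ Suc I) = z ^ (q ^ I * q)" by (simp add: mult.commute)
    thus "(\<alpha> ^ K * z ^ (q ^ I)) ^ q = \<alpha> ^ (K * q) * z ^ (q ^ Suc I)" by (simp only: power_mult power_mult_distrib)
  qed
  have A: "(\<lambda>z. z ^ q) \<circ> f = (\<lambda>z. \<alpha> ^ (K * q) * z ^ (q ^ Suc I))"
    unfolding KI(1)
  proof (rule ext)
    fix z :: 'a
    show "((\<lambda>z. z ^ q) \<circ> (\<lambda>z. \<alpha> ^ K * z ^ (q ^ I))) z = \<alpha> ^ (K * q) * z ^ (q ^ Suc I)"
      using h[of z] by (simp only: comp_apply)
  qed
  have C: "Dt ^ (K * q) = Dt ^ K"
  proof -
    have "Dt ^ (K * q) = (Dt ^ q) ^ K" by (simp add: power_mult[symmetric] mult.commute)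
    thus ?thesis by (simp only: Dt_q)
  qed
  have B: "D ((\<lambda>z. z ^ q) \<circ> f) = Ds * (Dt ^ K * Ds ^ I)"
    by (subst D_comp[OF lin_sigma GammaL_lin[OF GammaL_sigma.hyps]]) (simp only: KI(2))
  have B': "D ((\<lambda>z. z ^ q) \<circ> f) = Dt ^ (K * q) * Ds ^ Suc I"
    by (simp only: B C power_Suc) (simp only: ac_simps)
  show ?case using A B' by blast
qed

lemma main: "\<not> (\<forall>x y :: 'a. x \<noteq> 0 \<longrightarrow> y \<noteq> 0 \<longrightarrow> (\<exists>g \<in> GammaL1 \<alpha> q n. g x = y))"
proof
  assume H: "\<forall>x y :: 'a. x \<noteq> 0 \<longrightarrow> y \<noteq> 0 \<longrightarrow> (\<exists>g \<in> GammaL1 \<alpha> q n. g x = y)"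
  have "\<exists>g\<in>GammaL1 \<alpha> q n. g 1 = \<alpha>" using H alpha_nz by simp
  then obtain g where g: "g \<in> GammaL1 \<alpha> q n" "g 1 = \<alpha>" by blast
  have gG: "g \<in> GammaL \<alpha> q" and Dg: "D g = 1" using g(1) by (auto simp: GammaL1_def D_def)
  obtain K I where KI: "g = (\<lambda>z. \<alpha> ^ K * z ^ (q ^ I))" "D g = Dt ^ K * Ds ^ I"
    using GammaL_form[OF gG] by blast
  have aK: "\<alpha> ^ K = \<alpha>" using g(2) KI(1) by simp
  have "(\<lambda>z. \<alpha> ^ K * z) = (\<lambda>z. \<alpha> * z)" using aK by simp
  hence "Dt ^ K = Dt" using t_mem[of K] by simp
  hence "1 = Dt * Ds ^ I" using KI(2) Dg by simp
  hence "1 = (Dt * Ds ^ I) ^ n" by (metis power_one)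
  also have "... = Dt ^ n * (Ds ^ n) ^ I" by (simp add: power_mult_distrib power_mult[symmetric] mult.commute)
  finally have Dtn: "Dt ^ n = 1" using Ds_n by simp
  obtain M where M: "(-1::'a) = \<alpha> ^ M" using gen by force
  have "(\<lambda>z. \<alpha> ^ M * z) = (\<lambda>z. (-1) * z)" using M by simp
  hence "Dt ^ M = (-1) ^ n" using t_mem[of M] D_scal[OF F_m1] by simp
  hence "Dt ^ M = -1" using odd_n by simp
  hence "(Dt ^ M) ^ n = -1" using odd_n by simp
  moreover have "(Dt ^ M) ^ n = (Dt ^ n) ^ M" by (simp only: power_mult[symmetric] mult.commute)
  hence "(Dt ^ M) ^ n = 1" using Dtn by simp
  ultimately show False using minus_one_ne_one by simp
qed

end

theorem lemma3p2:
  fixes \<alpha> :: "'a::{finite, field}" and q n :: nat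
  assumes "odd n" and "n > 0"
    and "\<exists>p k. prime p \<and> k > 0 \<and> q = p ^ k" and "odd q"
    and "card (UNIV :: 'a set) = q ^ n"
    and "\<forall>x::'a. x \<noteq> 0 \<longrightarrow> (\<exists>k::nat. x = \<alpha> ^ k)"
  shows "\<not> (\<forall>x y :: 'a. x \<noteq> 0 \<longrightarrow> y \<noteq> 0 \<longrightarrow> (\<exists>g \<in> GammaL1 \<alpha> q n. g x = y))"
proof -
  interpret LL \<alpha> q n using assms by unfold_locales
  show ?thesis by (rule main)
qed

end
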